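(* For every real $M\ge1$, $$\mathrm{supp}(F_M)\subseteq\{x\in\mathbb{R}^2:|qx-r|\le|q|^{-\tau}\text{ for some }(q,r)\in\mathbb{Z}^2(M)\times\mathbb{Z}^2\}.$$ Moreover, for any sequence $(M_k)_{k\ge1}$ of real numbers $M_k\ge1$ with $M_k\le M_{k+1}/2$ for all $k\in\mathbb{N}$, $$\bigcap_{k=1}^\infty\mathrm{supp}(F_{M_k})\subseteq E_\ast(\tau).$$
   Context: Identify $\mathbb{R}^2$ with $\mathbb{C}$ (products $qx$ are complex multiplication, $\mathbb{Z}^2$ is the Gaussian integers); $|x|=\max(|x_1|,|x_2|)$. Let $\tau\in\mathbb{R}$, $\tau\neq-1$, $a=2/(1+\tau)$, and fix a positive integer $K>2+a$. Fix a non-negative $C^K$ function $\phi$ on $\mathbb{R}^2$ with $\int\phi=1$ and $\mathrm{supp}(\phi)\subseteq[-1,1]^2$. For $\varepsilon>0$ let $\phi^\varepsilon(x)=\varepsilon^{-2}\phi(x/\varepsilon)$, $\Phi^\varepsilon(x)=\sum_{r\in\mathbb{Z}^2}\phi^\varepsilon(x-r)$, $\Phi^\varepsilon_q(x)=\Phi^\varepsilon(qx)$. For $M>0$ let $\mathbb{Z}^2(M)=\{q\in\mathbb{Z}^2:M/2<|q|\le M\}$, $\varepsilon(M)=\tfrac12M^{-\tau}$, and $F_M=\frac{1}{|\mathbb{Z}^2(M)|}\sum_{q\in\mathbb{Z}^2(M)}\Phi^{\varepsilon(M)}_q$. Define $$E_\ast(\tau)=\{x\in\mathbb{R}^2:|qx-r|\le|q|^{-\tau}\text{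 for infinitely many }(q,r)\in\mathbb{Z}^2\times\mathbb{Z}^2,\ q\neq0\}.$$ *)

theory Defs
  imports "HOL-Analysis.Analysis"
begin

text \<open>R^2 is identified with the complex plane; Z^2 with the Gaussian integers.\<close>

definition ninf :: "complex \<Rightarrow> real" where
  "ninf x = max \<bar>Re x\<bar> \<bar>Im x\<bar>"

definition gauss :: "complex set" where
  "gauss = {z. Re z \<in> \<int> \<and> Im z \<in> \<int>}"

fun Ck :: "nat \<Rightarrow> (complex \<Rightarrow> real) \<Rightarrow> bool" where
  "Ck 0 f = continuous_on UNIV f"
| "Ck (Suc k) f = (\<exists>D1 D2. (\<forall>x. (f has_derivative (\<lambda>h. Re h * D1 x + Im h * D2 x)) (at x))
                        \<and> Ck k D1 \<and> Ck k D2)"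

definition supp :: "(complex \<Rightarrow> real) \<Rightarrow> complex set" where
  "supp f = closure {x. f x \<noteq> 0}"

definition phi_eps :: "(complex \<Rightarrow> real) \<Rightarrow> real \<Rightarrow> complex \<Rightarrow> real" where
  "phi_eps \<phi> \<epsilon> x = \<phi> (x / complex_of_real \<epsilon>) / \<epsilon>\<^sup>2"

definition Phi_eps :: "(complex \<Rightarrow> real) \<Rightarrow> real \<Rightarrow> complex \<Rightarrow> real" where
  "Phi_eps \<phi> \<epsilon> x = (\<Sum>\<^sub>\<infinity>r\<in>gauss. phi_eps \<phi> \<epsilon> (x - r))"

definition ZM :: "real \<Rightarrow> complex set" where
  "ZM M = {q \<in> gauss. M / 2 < ninf q \<and> ninf q \<le> M}"

definition eps :: "real \<Rightarrow> real \<Rightarrow> real" where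
  "eps \<tau> M = (1/2) * M powr (-\<tau>)"

definition F :: "(complex \<Rightarrow> real) \<Rightarrow> real \<Rightarrow> real \<Rightarrow> complex \<Rightarrow> real" where
  "F \<phi> \<tau> M x = (\<Sum>q\<in>ZM M. Phi_eps \<phi> (eps \<tau> M) (q * x)) / real (card (ZM M))"

definition E_star :: "real \<Rightarrow> complex set" where
  "E_star \<tau> = {x. infinite {(q, r). q \<in> gauss \<and> q \<noteq> 0 \<and> r \<in> gauss \<and>
                               ninf (q * x - r) \<le> ninf q powr (-\<tau>)}}"

end

theory Submission
  imports Defs
begin

lemma ex_gauss_iff:
  "(\<exists>r\<in>gauss. ninf (y - r) \<le> c) \<longleftrightarrow> infdist (Re y) \<int> \<le> c \<and> infdist (Im y) \<int> \<le> c"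
proof
  assume "\<exists>r\<in>gauss. ninf (y - r) \<le> c"
  then obtain r where r: "r \<in> gauss" "ninf (y - r) \<le> c" by blast
  have "infdist (Re y) \<int> \<le> dist (Re y) (Re r)"
    using r(1) by (intro infdist_le) (auto simp: gauss_def)
  moreover have "infdist (Im y) \<int> \<le> dist (Im y) (Im r)"
    using r(1) by (intro infdist_le) (auto simp: gauss_def)
  ultimately show "infdist (Re y) \<int> \<le> c \<and> infdist (Im y) \<int> \<le> c"
    using r(2) by (auto simp: ninf_def dist_real_def)
next
  assume h: "infdist (Re y) \<int> \<le> c \<and> infdist (Im y) \<int> \<le> c"
  have ne: "(\<int>::real set) \<noteq> {}" by auto
  obtain a where a: "a \<in> \<int>" "infdist (Re y) \<int> = dist (Re y) a"
    using infdist_attains_inf[OF closed_Ints ne] by blast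
  obtain b where b: "b \<in> \<int>" "infdist (Im y) \<int> = dist (Im y) b"
    using infdist_attains_inf[OF closed_Ints ne] by blast
  have "Complex a b \<in> gauss" using a b by (simp add: gauss_def)
  moreover have "ninf (y - Complex a b) \<le> c"
    using h a b by (simp add: ninf_def dist_real_def)
  ultimately show "\<exists>r\<in>gauss. ninf (y - r) \<le> c" by blast
qed

lemma closed_target:
  assumes "finite Q"
  shows "closed {x. \<exists>q\<in>Q. \<exists>r\<in>gauss. ninf (q * x - r) \<le> c q}"
proof -
  have "{x. \<exists>q\<in>Q. \<exists>r\<in>gauss. ninf (q * x - r) \<le> c q}
      = (\<Union>q\<in>Q. {x. infdist (Re (q*x)) \<int> \<le> c q} \<inter> {x. infdist (Im (q*x)) \<int> \<le> c q})"
    by (auto simp: ex_gauss_iff)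
  moreover have "closed (\<Union>q\<in>Q. {x. infdist (Re (q*x)) \<int> \<le> c q} \<inter> {x. infdist (Im (q*x)) \<int> \<le> c q})"
    using assms
  proof (intro closed_UN assms ballI closed_Int)
    fix q
    show "closed {x. infdist (Re (q*x)) \<int> \<le> c q}"
      by (intro closed_Collect_le continuous_on_infdist continuous_intros)
    show "closed {x. infdist (Im (q*x)) \<int> \<le> c q}"
      by (intro closed_Collect_le continuous_on_infdist continuous_intros)
  qed
  ultimately show ?thesis by simp
qed

lemma finite_ZM: "finite (ZM M)"
proof -
  have "ZM M \<subseteq> (\<lambda>(a,b). Complex (of_int a) (of_int b)) ` ({-\<lceil>M\<rceil>..\<lceil>M\<rceil>} \<times> {-\<lceil>M\<rceil>..\<lceil>M\<rceil>})"
  proof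
    fix q assume q: "q \<in> ZM M"
    then obtain a b where ab: "Re q = of_int a" "Im q = of_int b"
      by (auto simp: ZM_def gauss_def elim!: Ints_cases)
    have "\<bar>Re q\<bar> \<le> M" "\<bar>Im q\<bar> \<le> M" using q by (auto simp: ZM_def ninf_def)
    hence "a \<in> {-\<lceil>M\<rceil>..\<lceil>M\<rceil>}" "b \<in> {-\<lceil>M\<rceil>..\<lceil>M\<rceil>}" using ab
      by (auto simp: abs_le_iff) (linarith+)
    moreover have "q = Complex (of_int a) (of_int b)" using ab by (simp add: complex_eq_iff)
    ultimately show "q \<in> (\<lambda>(a,b). Complex (of_int a) (of_int b)) ` ({-\<lceil>M\<rceil>..\<lceil>M\<rceil>} \<times> {-\<lceil>M\<rceil>..\<lceil>M\<rceil>})"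
      by force
  qed
  thus ?thesis by (rule finite_subset) auto
qed

lemma ninf_div: "e > 0 \<Longrightarrow> ninf (z / complex_of_real e) = ninf z / e"
  by (simp add: ninf_def Re_divide_of_real Im_divide_of_real max_divide_distrib_right)

lemma ninf_ge1: "q \<in> gauss \<Longrightarrow> ninf q > 1/2 \<Longrightarrow> ninf q \<ge> 1"
proof -
  assume "q \<in> gauss" "ninf q > 1/2"
  then obtain a b where ab: "Re q = of_int a" "Im q = of_int b" "max \<bar>real_of_int a\<bar> \<bar>of_int b\<bar> > 1/2"
    by (auto simp: gauss_def ninf_def elim!: Ints_cases)
  hence "a \<noteq> 0 \<or> b \<noteq> 0" by auto
  hence "max \<bar>real_of_int a\<bar> \<bar>of_int b\<bar> \<ge> 1" by (auto simp: max_def)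
  thus "ninf q \<ge> 1" using ab by (simp add: ninf_def)
qed

lemma part1:
  assumes phi: "supp \<phi> \<subseteq> {x. ninf x \<le> 1}" and M: "M \<ge> 1"
  shows "supp (F \<phi> \<tau> M) \<subseteq> {x. \<exists>q\<in>ZM M. \<exists>r\<in>gauss. ninf (q * x - r) \<le> ninf q powr (-\<tau>)}"
proof (cases "\<tau> > 0")
  case False
  define n where "n = \<lfloor>M\<rfloor>"
  have n: "real_of_int n > M/2" "real_of_int n \<le> M"
  proof -
    show "real_of_int n \<le> M" unfolding n_def by linarith
    show "real_of_int n > M/2"
    proof (cases "M \<ge> 2")
      case True thus ?thesis unfolding n_def by linarith
    next
      case False
      hence "\<lfloor>M\<rfloor> = 1" using M by (simp add: floor_eq_iff)
      thus ?thesis using False unfolding n_def by simp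
    qed
  qed
  have qZ: "complex_of_int n \<in> ZM M"
    using n M by (auto simp: ZM_def gauss_def ninf_def)
  have "{x. \<exists>q\<in>ZM M. \<exists>r\<in>gauss. ninf (q * x - r) \<le> ninf q powr (-\<tau>)} = UNIV"
  proof safe
    fix x
    let ?q = "complex_of_int n"
    let ?y = "?q * x"
    let ?r = "Complex (of_int (round (Re ?y))) (of_int (round (Im ?y)))"
    have "?r \<in> gauss" by (simp add: gauss_def)
    moreover have "ninf (?y - ?r) \<le> 1/2"
      using of_int_round_abs_le[of "Re ?y"] of_int_round_abs_le[of "Im ?y"]
      by (simp add: ninf_def abs_minus_commute)
    moreover have "ninf ?q \<ge> 1" using qZ M by (intro ninf_ge1) (auto simp: ZM_def)
    hence "ninf ?q powr (-\<tau>) \<ge> 1" using False by (intro ge_one_powr_ge_zero) auto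
    ultimately show "\<exists>q\<in>ZM M. \<exists>r\<in>gauss. ninf (q * x - r) \<le> ninf q powr (-\<tau>)"
      using qZ by (intro bexI[of _ ?q] bexI[of _ ?r]) auto
  qed simp
  thus ?thesis by simp
next
  case True
  define e where "e = eps \<tau> M"
  have e: "e > 0" using M by (simp add: e_def eps_def)
  show ?thesis
  unfolding supp_def
  proof (rule closure_minimal)
    show "closed {x. \<exists>q\<in>ZM M. \<exists>r\<in>gauss. ninf (q * x - r) \<le> ninf q powr (-\<tau>)}"
      by (rule closed_target[OF finite_ZM])
    show "{x. F \<phi> \<tau> M x \<noteq> 0} \<subseteq> {x. \<exists>q\<in>ZM M. \<exists>r\<in>gauss. ninf (q * x - r) \<le> ninf q powr (-\<tau>)}"
    proof safe
      fix x assume "F \<phi> \<tau> M x \<noteq> 0"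
      hence "(\<Sum>q\<in>ZM M. Phi_eps \<phi> e (q * x)) \<noteq> 0" by (auto simp: F_def e_def)
      then obtain q where q: "q \<in> ZM M" "Phi_eps \<phi> e (q * x) \<noteq> 0"
        by (meson sum.neutral)
      then obtain r where r: "r \<in> gauss" "phi_eps \<phi> e (q*x - r) \<noteq> 0"
        unfolding Phi_eps_def by (meson infsum_0)
      hence "\<phi> ((q*x - r) / complex_of_real e) \<noteq> 0" by (auto simp: phi_eps_def)
      hence "(q*x - r) / complex_of_real e \<in> supp \<phi>"
        unfolding supp_def by (meson closure_subset mem_Collect_eq subsetD)
      hence "ninf ((q*x - r) / complex_of_real e) \<le> 1" using phi by auto
      hence h1: "ninf (q*x - r) \<le> e" using e by (simp add: ninf_div)
      have qpos: "ninf q > 0" "ninf q \<le> M" using q M by (auto simp: ZM_def)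
      have "e \<le> M powr (-\<tau>)" by (simp add: e_def eps_def)
      also have "\<dots> \<le> ninf q powr (-\<tau>)" using True qpos by (intro powr_mono2') auto
      finally show "\<exists>q\<in>ZM M. \<exists>r\<in>gauss. ninf (q * x - r) \<le> ninf q powr (-\<tau>)"
        using q(1) r(1) h1 by (meson order.trans)
    qed
  qed
qed

theorem lemma4:
  fixes \<tau> :: real and K :: nat and \<phi> :: "complex \<Rightarrow> real"
  assumes "\<tau> \<noteq> -1"
    and "real K > 2 + 2 / (1 + \<tau>)"
    and "K > 0"
    and "\<forall>x. \<phi> x \<ge> 0"
    and "Ck K \<phi>"
    and "(\<phi> has_integral 1) UNIV"
    and "supp \<phi> \<subseteq> {x. ninf x \<le> 1}"
  shows "(\<forall>M::real. M \<ge> 1 \<longrightarrow>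
           supp (F \<phi> \<tau> M) \<subseteq>
             {x. \<exists>q\<in>ZM M. \<exists>r\<in>gauss. ninf (q * x - r) \<le> ninf q powr (-\<tau>)})
       \<and> (\<forall>Ms :: nat \<Rightarrow> real. (\<forall>k\<ge>1. Ms k \<ge> 1 \<and> Ms k \<le> Ms (Suc k) / 2) \<longrightarrow>
           (\<Inter>k\<in>{1..}. supp (F \<phi> \<tau> (Ms k))) \<subseteq> E_star \<tau>)"
proof (intro conjI allI impI)
  fix M :: real assume "M \<ge> 1"
  from part1[OF assms(7) this] show "supp (F \<phi> \<tau> M) \<subseteq> {x. \<exists>q\<in>ZM M. \<exists>r\<in>gauss. ninf (q * x - r) \<le> ninf q powr (-\<tau>)}" .
next
  fix Ms :: "nat \<Rightarrow> real"
  assume Ms: "\<forall>k\<ge>1. Ms k \<ge> 1 \<and> Ms k \<le> Ms (Suc k) / 2"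
  show "(\<Inter>k\<in>{1..}. supp (F \<phi> \<tau> (Ms k))) \<subseteq> E_star \<tau>"
  proof

  fix x
  assume x: "x \<in> (\<Inter>k\<in>{1..}. supp (F \<phi> \<tau> (Ms k)))"
  have "\<forall>k. \<exists>qr. k \<ge> 1 \<longrightarrow> fst qr \<in> ZM (Ms k) \<and> snd qr \<in> gauss \<and>
          ninf (fst qr * x - snd qr) \<le> ninf (fst qr) powr (-\<tau>)"
  proof
    fix k
    show "\<exists>qr. k \<ge> 1 \<longrightarrow> fst qr \<in> ZM (Ms k) \<and> snd qr \<in> gauss \<and>
          ninf (fst qr * x - snd qr) \<le> ninf (fst qr) powr (-\<tau>)"
    proof (cases "k \<ge> 1")
      case True
      with x part1[OF assms(7), of "Ms k" \<tau>] Ms show ?thesis by fastforce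
    qed auto
  qed
  then obtain g where g: "\<And>k. k \<ge> 1 \<Longrightarrow> fst (g k) \<in> ZM (Ms k) \<and> snd (g k) \<in> gauss \<and>
          ninf (fst (g k) * x - snd (g k)) \<le> ninf (fst (g k)) powr (-\<tau>)"
    by metis
  have mono: "Ms k \<le> Ms j" if "1 \<le> k" "k \<le> j" for k j
    using that(2)
  proof (induction j rule: dec_induct)
    case (step j)
    then show ?case using Ms[rule_format, of j] that(1) by auto
  qed simp
  have sm: "ninf (fst (g k)) < ninf (fst (g j))" if "1 \<le> k" "k < j" for k j
  proof -
    have "ninf (fst (g k)) \<le> Ms k" using g[of k] that by (auto simp: ZM_def)
    also have "\<dots> \<le> Ms (j - 1)" using mono[of k "j-1"] that by auto
    also have "\<dots> \<le> Ms j / 2" using Ms[rule_format, of "j-1"] that by auto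
    also have "\<dots> < ninf (fst (g j))" using g[of j] that by (auto simp: ZM_def)
    finally show ?thesis .
  qed
  have inj: "inj_on g {1..}"
  proof (rule inj_onI)
    fix k j assume "k \<in> {1..}" "j \<in> {1..}" "g k = g j"
    thus "k = j" using sm[of k j] sm[of j k] by (cases k j rule: linorder_cases) auto
  qed
  have sub: "g ` {1..} \<subseteq> {(q, r). q \<in> gauss \<and> q \<noteq> 0 \<and> r \<in> gauss \<and>
                               ninf (q * x - r) \<le> ninf q powr (-\<tau>)}"
  proof (rule image_subsetI)
    fix k assume k: "k \<in> {1::nat..}"
    obtain a b where gk: "g k = (a, b)" by fastforce
    have Mk: "Ms k \<ge> 1" using Ms k by auto
    from g[of k] k gk Mk have "a \<in> ZM (Ms k)" "b \<in> gauss" "ninf (a * x - b) \<le> ninf a powr (-\<tau>)"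
      by auto
    moreover have "a \<noteq> 0" using \<open>a \<in> ZM (Ms k)\<close> Mk by (auto simp: ZM_def ninf_def)
    ultimately show "g k \<in> {(q, r). q \<in> gauss \<and> q \<noteq> 0 \<and> r \<in> gauss \<and>
                               ninf (q * x - r) \<le> ninf q powr (-\<tau>)}"
      using gk by (auto simp: ZM_def)
  qed
  have "infinite (g ` {1..})"
    using inj by (simp add: finite_image_iff infinite_Ici)
  hence "infinite {(q, r). q \<in> gauss \<and> q \<noteq> 0 \<and> r \<in> gauss \<and>
                               ninf (q * x - r) \<le> ninf q powr (-\<tau>)}"
    using sub finite_subset by blast
  thus "x \<in> E_star \<tau>" by (simp add: E_star_def)
qed
qed

end
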